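(* Let $K,G,\eta,\bar\eta,\xi,c_0>0$ and let $H:\mathbb R_+\to\mathbb R_+$ be nondecreasing, strongly semismooth, with $H(0)=0$. Let $f(\boldsymbol\sigma,\kappa)=\hat f(p(\boldsymbol\sigma),\varrho(\boldsymbol\sigma),\kappa)=\sqrt{\tfrac12}\varrho(\boldsymbol\sigma)+\eta p(\boldsymbol\sigma)-\xi(c_0+\kappa)$. Let $\boldsymbol\sigma^{tr}\in\mathbb R^{3\times3}_{sym}$, $\bar\varepsilon^{p,tr}\ge0$ be given, $p^{tr}=p(\boldsymbol\sigma^{tr})$, $\varrho^{tr}=\varrho(\boldsymbol\sigma^{tr})$, and define for $\gamma\ge0$ $$q_{tr}(\gamma)=\sqrt{\tfrac12}\big(\varrho^{tr}-\gamma G\sqrt2\big)^++\eta(p^{tr}-\gamma K\bar\eta)-\xi\big(c_0+H(\bar\varepsilon^{p,tr}+\gamma\xi)\big).$$ Assume $f(\boldsymbol\sigma^{tr},H(\bar\varepsilon^{p,tr}))>0$. Then there exists a unique $\triangle\lambda>0$ with $q_{tr}(\triangle\lambda)=0$. Furthermore, each of the following problems has a unique solution: (R) find $(p,\varrho,\bar\varepsilon^p,\triangle\lambda)$ with $p=p^{tr}-\triangle\lambda K\bar\eta$, $\varrho=(\varrho^{tr}-\triangle\lambda G\sqrt2)^+$, $\bar\varepsilon^p=\bar\varepsilon^{p,tr}+\triangle\lambda\xi$, $\hat f(p,\varrho,H(\bar\varepsilon^p))=0$; (P) find $(\boldsymbol\sigma,\bar\varepsilon^p,\triangle\lambda)$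 with $\boldsymbol\sigma=\boldsymbol\sigma^{tr}-\triangle\lambda(G\sqrt2\hat{\mathbf n}+K\bar\eta\mathbf I)$ for some $\hat{\mathbf n}\in\partial\varrho(\boldsymbol\sigma)$, $\bar\varepsilon^p=\bar\varepsilon^{p,tr}+\triangle\lambda\xi$, $f(\boldsymbol\sigma,H(\bar\varepsilon^p))=0$; (Q) find $(\boldsymbol\sigma,\bar\varepsilon^p,\triangle\lambda)$ with the same two equations as in (P) and $\triangle\lambda\ge0$, $f(\boldsymbol\sigma,H(\bar\varepsilon^p))\le0$, $\triangle\lambda f(\boldsymbol\sigma,H(\bar\varepsilon^p))=0$. In addition, if $q_{tr}(\varrho^{tr}/(G\sqrt2))<0$ then $\triangle\lambda\in(0,\varrho^{tr}/(G\sqrt2))$ and $\varrho>0$; conversely, if $q_{tr}(\varrho^{tr}/(G\sqrt2))\ge0$ then $\triangle\lambda\ge\varrho^{tr}/(G\sqrt2)$ and $\varrho=0$ (where $\varrho$ is the corresponding component of the solution of (R)).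
   Context: $\mathbb R^{3\times3}_{sym}$: real symmetric $3\times3$ matrices with Frobenius product ":" and norm; $\mathbf I$ identity; $p(\boldsymbol\sigma)=\frac13\mathbf I:\boldsymbol\sigma$, $\mathbf s(\boldsymbol\sigma)=\boldsymbol\sigma-p(\boldsymbol\sigma)\mathbf I$, $\varrho(\boldsymbol\sigma)=\|\mathbf s(\boldsymbol\sigma)\|$; $(x)^+=\max\{0,x\}$. $\partial\varrho(\boldsymbol\sigma)=\{\mathbf s(\boldsymbol\sigma)/\varrho(\boldsymbol\sigma)\}$ if $\varrho(\boldsymbol\sigma)>0$, and $\{\hat{\mathbf n}\in\mathbb R^{3\times3}_{sym}:\mathbf I:\hat{\mathbf n}=0,\|\hat{\mathbf n}\|\le1\}$ if $\varrho(\boldsymbol\sigma)=0$. Strong semismoothness: local Lipschitz continuity, directional differentiability, and $F(x+h)-F(x)-Vh=O(\|h\|^2)$ for all $V\in\partial F(x+h)$ (Clarke generalized Jacobian) as $h\to0$. *)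

theory Defs
  imports "HOL-Analysis.Analysis"
begin

type_synonym mat3 = "real^3^3"

definition Sym3 :: "mat3 set" where
  "Sym3 = {A. transpose A = A}"

definition frob :: "mat3 \<Rightarrow> mat3 \<Rightarrow> real" (infixl ":::" 70) where
  "frob A B = (\<Sum>i\<in>UNIV. \<Sum>j\<in>UNIV. A $ i $ j * B $ i $ j)"

definition fnorm :: "mat3 \<Rightarrow> real" where
  "fnorm A = sqrt (frob A A)"

definition Id3 :: mat3 where "Id3 = mat 1"

definition pres :: "mat3 \<Rightarrow> real" where
  "pres \<sigma> = (1/3) * frob Id3 \<sigma>"

definition dev :: "mat3 \<Rightarrow> mat3" where
  "dev \<sigma> = \<sigma> - pres \<sigma> *\<^sub>R Id3"

definition rho :: "mat3 \<Rightarrow> real" where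
  "rho \<sigma> = fnorm (dev \<sigma>)"

definition pos :: "real \<Rightarrow> real" where
  "pos x = max 0 x"

definition subdiff_rho :: "mat3 \<Rightarrow> mat3 set" where
  "subdiff_rho \<sigma> = (if rho \<sigma> > 0 then {(1 / rho \<sigma>) *\<^sub>R dev \<sigma>}
     else {n \<in> Sym3. frob Id3 n = 0 \<and> fnorm n \<le> 1})"

definition fhat :: "real \<Rightarrow> real \<Rightarrow> real \<Rightarrow> real \<Rightarrow> real \<Rightarrow> real \<Rightarrow> real" where
  "fhat eta xi c0 p r \<kappa> = sqrt (1/2) * r + eta * p - xi * (c0 + \<kappa>)"

definition yieldf :: "real \<Rightarrow> real \<Rightarrow> real \<Rightarrow> mat3 \<Rightarrow> real \<Rightarrow> real" where
  "yieldf eta xi c0 \<sigma> \<kappa> = fhat eta xi c0 (pres \<sigma>) (rho \<sigma>) \<kappa>"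

definition q_tr :: "real \<Rightarrow> real \<Rightarrow> real \<Rightarrow> real \<Rightarrow> real \<Rightarrow> real \<Rightarrow> (real \<Rightarrow> real)
    \<Rightarrow> mat3 \<Rightarrow> real \<Rightarrow> real \<Rightarrow> real" where
  "q_tr K G eta etab xi c0 H \<sigma>tr etr \<gamma> =
     sqrt (1/2) * pos (rho \<sigma>tr - \<gamma> * G * sqrt 2) + eta * (pres \<sigma>tr - \<gamma> * K * etab)
     - xi * (c0 + H (etr + \<gamma> * xi))"

definition clarke_jac :: "(real \<Rightarrow> real) \<Rightarrow> real \<Rightarrow> real set" where
  "clarke_jac H x = convex hull {d. \<exists>xs ds. (\<forall>k. xs k > 0 \<and> (H has_real_derivative ds k) (at (xs k)))
        \<and> xs \<longlonglongrightarrow> x \<and> ds \<longlonglongrightarrow> d}"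

definition strongly_semismooth :: "(real \<Rightarrow> real) \<Rightarrow> bool" where
  "strongly_semismooth H \<longleftrightarrow>
     (\<forall>x\<ge>0. \<exists>\<delta>>0. \<exists>L. \<forall>y z. y \<ge> 0 \<and> z \<ge> 0 \<and> \<bar>y - x\<bar> < \<delta> \<and> \<bar>z - x\<bar> < \<delta>
          \<longrightarrow> \<bar>H y - H z\<bar> \<le> L * \<bar>y - z\<bar>)
   \<and> (\<forall>x\<ge>0. \<forall>d. (x > 0 \<or> d \<ge> 0) \<longrightarrow>
          (\<exists>l. ((\<lambda>t. (H (x + t * d) - H x) / t) \<longlongrightarrow> l) (at_right 0)))
   \<and> (\<forall>x\<ge>0. \<exists>C \<delta>. \<delta> > 0 \<and> (\<forall>h V. x + h \<ge> 0 \<and> \<bar>h\<bar> < \<delta> \<and> V \<in> clarke_jac H (x + h)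
          \<longrightarrow> \<bar>H (x + h) - H x - V * h\<bar> \<le> C * h\<^sup>2))"

end

theory Submission imports Defs begin
lemma frob_inner: "frob A B = inner A B"
  unfolding frob_def inner_vec_def by (simp add: inner_real_def)
lemma fnorm_norm: "fnorm A = norm A"
  unfolding fnorm_def frob_inner norm_eq_sqrt_inner ..
lemma Id3_inner: "inner Id3 Id3 = 3"
proof -
  have "inner Id3 Id3 = (\<Sum>i\<in>(UNIV::3 set). \<Sum>j\<in>(UNIV::3 set). if i = j then 1 else 0)"
    unfolding Id3_def inner_vec_def by (intro sum.cong refl) (simp add: mat_def inner_real_def)
  also have "\<dots> = 3" by simp
  finally show ?thesis .
qed
lemma Id3_dev: "inner Id3 (dev A) = 0"
  unfolding dev_def pres_def frob_inner by (simp add: inner_diff_right Id3_inner)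
lemma sym_add: "A \<in> Sym3 \<Longrightarrow> B \<in> Sym3 \<Longrightarrow> A + B \<in> Sym3"
  unfolding Sym3_def by (auto simp: transpose_def vec_eq_iff)
lemma sym_diff: "A \<in> Sym3 \<Longrightarrow> B \<in> Sym3 \<Longrightarrow> A - B \<in> Sym3"
  unfolding Sym3_def by (auto simp: transpose_def vec_eq_iff)
lemma sym_scale: "A \<in> Sym3 \<Longrightarrow> c *\<^sub>R A \<in> Sym3"
  unfolding Sym3_def by (simp add: transpose_scalar)
lemma sym_Id: "Id3 \<in> Sym3"
  unfolding Sym3_def Id3_def by simp
lemma sym_dev: "A \<in> Sym3 \<Longrightarrow> dev A \<in> Sym3"
  unfolding dev_def by (intro sym_diff sym_scale sym_Id)
lemma sym_zero: "0 \<in> Sym3"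
  unfolding Sym3_def by (auto simp: transpose_def vec_eq_iff)
lemma pres_lin: "inner Id3 D = 0 \<Longrightarrow> pres (D + d *\<^sub>R Id3) = d"
  unfolding pres_def frob_inner by (simp add: inner_add_right Id3_inner)
lemma dev_lin: "inner Id3 D = 0 \<Longrightarrow> dev (D + d *\<^sub>R Id3) = D"
  unfolding dev_def by (simp add: pres_lin)
lemma decomp: "A = dev A + pres A *\<^sub>R Id3"
  unfolding dev_def by simp
lemma rho_norm: "rho A = norm (dev A)"
  unfolding rho_def fnorm_norm ..

definition sig :: "mat3 \<Rightarrow> real \<Rightarrow> real \<Rightarrow> real \<Rightarrow> mat3" where
  "sig A s k dl = (if rho A - dl * s > 0 then ((rho A - dl * s) / rho A) *\<^sub>R dev A else 0)
      + (pres A - dl * k) *\<^sub>R Id3"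

lemma char:
  assumes s: "s > 0" and dl: "dl \<ge> 0" and n: "n \<in> subdiff_rho \<sigma>"
    and eq: "\<sigma> = A - dl *\<^sub>R (s *\<^sub>R n + k *\<^sub>R Id3)"
  shows "pres \<sigma> = pres A - dl * k \<and> rho \<sigma> = pos (rho A - dl * s) \<and> \<sigma> = sig A s k dl"
proof -
  have n0: "inner Id3 n = 0"
    using n unfolding subdiff_rho_def by (auto split: if_splits simp: Id3_dev frob_inner)
  have p: "pres \<sigma> = pres A - dl * k"
    unfolding eq pres_def frob_inner
    by (simp add: inner_diff_right inner_add_right n0 Id3_inner algebra_simps)
  have d: "dev \<sigma> = dev A - (dl * s) *\<^sub>R n"
  proof -
    have "dev \<sigma> = \<sigma> - (pres A - dl * k) *\<^sub>R Id3" by (simp add: dev_def p)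
    thus ?thesis by (simp add: eq dev_def algebra_simps)
  qed
  show ?thesis
  proof (cases "rho \<sigma> > 0")
    case True
    let ?r = "rho \<sigma>"
    have nn: "n = (1 / ?r) *\<^sub>R dev \<sigma>" using n True unfolding subdiff_rho_def by simp
    have dA: "dev A = (1 + dl * s / ?r) *\<^sub>R dev \<sigma>"
      using d nn by (simp add: algebra_simps)
    have pos1: "1 + dl * s / ?r > 0" using True s dl by (simp add: add_pos_nonneg)
    have "rho A = norm ((1 + dl * s / ?r) *\<^sub>R dev \<sigma>)" using dA by (simp add: rho_norm)
    also have "\<dots> = (1 + dl * s / ?r) * ?r" using pos1 by (simp add: rho_norm)
    also have "\<dots> = ?r + dl * s" using True by (simp add: field_simps)
    finally have rA: "rho A = ?r + dl * s" .
    have r1: "rho A - dl * s = ?r" using rA by simp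
    have rApos: "rho A > 0" using rA True s dl by (smt (verit) mult_nonneg_nonneg)
    have dA': "dev A = (rho A / ?r) *\<^sub>R dev \<sigma>" using dA rA True by (simp add: field_simps)
    have "(?r / rho A) *\<^sub>R dev A = ((?r / rho A) * (rho A / ?r)) *\<^sub>R dev \<sigma>"
      using dA' by simp
    also have "(?r / rho A) * (rho A / ?r) = 1" using rApos True by simp
    finally have dA2: "dev \<sigma> = (?r / rho A) *\<^sub>R dev A" by simp
    show ?thesis using p r1 True dA2 decomp[of \<sigma>]
      by (simp add: pos_def sig_def)
  next
    case False
    hence r0: "rho \<sigma> = 0" using rho_norm[of \<sigma>] by simp
    hence dz: "dev \<sigma> = 0" by (simp add: rho_norm)
    have nb: "norm n \<le> 1" using n r0 unfolding subdiff_rho_def by (simp add: fnorm_norm)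
    have "rho A = dl * s * norm n" using d dz s dl by (simp add: rho_norm)
    also have "\<dots> \<le> dl * s" using nb s dl by (simp add: mult_left_le)
    finally have le: "rho A - dl * s \<le> 0" by simp
    show ?thesis using p r0 le dz decomp[of \<sigma>]
      by (simp add: pos_def sig_def)
  qed
qed

lemma exist:
  assumes s: "s > 0" and dl: "dl > 0" and sym: "A \<in> Sym3"
  shows "sig A s k dl \<in> Sym3 \<and> (\<exists>n\<in>subdiff_rho (sig A s k dl).
     sig A s k dl = A - dl *\<^sub>R (s *\<^sub>R n + k *\<^sub>R Id3))"
proof (cases "rho A - dl * s > 0")
  case True
  let ?c = "(rho A - dl * s) / rho A"
  have rA: "rho A > 0" using True s dl by (smt (verit) mult_pos_pos)
  have sg: "sig A s k dl = ?c *\<^sub>R dev A + (pres A - dl * k) *\<^sub>R Id3"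
    using True by (simp add: sig_def)
  have i0: "inner Id3 (?c *\<^sub>R dev A) = 0" by (simp add: Id3_dev)
  have dv: "dev (sig A s k dl) = ?c *\<^sub>R dev A" using sg dev_lin[OF i0] by simp
  have "rho (sig A s k dl) = norm (?c *\<^sub>R dev A)" using dv by (simp add: rho_norm)
  also have "\<dots> = ?c * rho A" using True rA by (simp add: rho_norm)
  also have "\<dots> = rho A - dl * s" using rA by simp
  finally have rs: "rho (sig A s k dl) = rho A - dl * s" .
  have sd: "subdiff_rho (sig A s k dl) = {(1 / rho A) *\<^sub>R dev A}"
    unfolding subdiff_rho_def using rs True dv rA by simp
  have "sig A s k dl = A - dl *\<^sub>R (s *\<^sub>R ((1 / rho A) *\<^sub>R dev A) + k *\<^sub>R Id3)"
    apply (subst (2) decomp[of A]) using rA unfolding sg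
    by (simp add: algebra_simps diff_divide_distrib)
  moreover have "sig A s k dl \<in> Sym3" unfolding sg
    by (intro sym_add sym_scale sym_dev sym sym_Id)
  ultimately show ?thesis using sd by blast
next
  case False
  let ?n = "(1 / (dl * s)) *\<^sub>R dev A"
  have sg: "sig A s k dl = (pres A - dl * k) *\<^sub>R Id3"
    using False by (simp add: sig_def)
  have dv: "dev (sig A s k dl) = 0" using sg dev_lin[of 0] by simp
  have rs: "rho (sig A s k dl) = 0" using dv by (simp add: rho_norm)
  have nb: "norm ?n \<le> 1" using False s dl
    by (simp add: rho_norm divide_le_eq_1)
  have "?n \<in> Sym3" by (intro sym_scale sym_dev sym)
  hence mem: "?n \<in> subdiff_rho (sig A s k dl)"
    unfolding subdiff_rho_def using rs nb by (simp add: fnorm_norm frob_inner Id3_dev)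
  have "sig A s k dl = A - dl *\<^sub>R (s *\<^sub>R ?n + k *\<^sub>R Id3)"
    apply (subst (2) decomp[of A]) using s dl unfolding sg
    by (simp add: algebra_simps)
  moreover have "sig A s k dl \<in> Sym3" unfolding sg
    by (intro sym_scale sym_Id)
  ultimately show ?thesis using mem by blast
qed

lemma ex1_triple:
  assumes "P a b c" and "\<And>x y z. P x y z \<Longrightarrow> x = a \<and> y = b \<and> z = c"
  shows "\<exists>!(x, y, z). P x y z"
proof (rule ex1I[where a="(a,b,c)"])
  show "case (a, b, c) of (x, y, z) \<Rightarrow> P x y z" using assms(1) by simp
next
  fix t assume "case t of (x, y, z) \<Rightarrow> P x y z"
  then show "t = (a, b, c)" using assms(2) by (cases t) auto
qed

lemma ex1_quad:
  assumes "P a b c d" and "\<And>x y z w. P x y z w \<Longrightarrow> x = a \<and> y = b \<and> z = c \<and> w = d"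
  shows "\<exists>!(x, y, z, w). P x y z w"
proof (rule ex1I[where a="(a,b,c,d)"])
  show "case (a, b, c, d) of (x, y, z, w) \<Rightarrow> P x y z w" using assms(1) by simp
next
  fix t assume "case t of (x, y, z, w) \<Rightarrow> P x y z w"
  then show "t = (a, b, c, d)" using assms(2) by (cases t) auto
qed

lemma H_cont:
  assumes "strongly_semismooth H"
  shows "continuous_on {0..} H"
  unfolding continuous_on_iff
proof (intro ballI allI impI)
  fix x e :: real assume x: "x \<in> {0..}" and e: "e > 0"
  obtain \<delta> L where d: "\<delta> > 0" and L: "\<forall>y z. y \<ge> 0 \<and> z \<ge> 0 \<and> \<bar>y - x\<bar> < \<delta> \<and> \<bar>z - x\<bar> < \<delta>
          \<longrightarrow> \<bar>H y - H z\<bar> \<le> L * \<bar>y - z\<bar>"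
  proof -
    have lip: "\<forall>x\<ge>0. \<exists>\<delta>>0. \<exists>L. \<forall>y z. y \<ge> 0 \<and> z \<ge> 0 \<and> \<bar>y - x\<bar> < \<delta> \<and> \<bar>z - x\<bar> < \<delta>
          \<longrightarrow> \<bar>H y - H z\<bar> \<le> L * \<bar>y - z\<bar>"
      using assms unfolding strongly_semismooth_def by (rule conjunct1)
    have "x \<ge> 0" using x by simp
    from lip[rule_format, OF this] show ?thesis using that by blast
  qed
  show "\<exists>d>0. \<forall>x'\<in>{0..}. dist x' x < d \<longrightarrow> dist (H x') (H x) < e"
  proof (intro exI[of _ "min \<delta> (e / (\<bar>L\<bar> + 1))"] conjI ballI impI)
    show "min \<delta> (e / (\<bar>L\<bar> + 1)) > 0" using d e by simp
    fix y assume y: "y \<in> {0..}" and dy: "dist y x < min \<delta> (e / (\<bar>L\<bar> + 1))"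
    have "\<bar>H y - H x\<bar> \<le> L * \<bar>y - x\<bar>" using L y x dy d by (auto simp: dist_real_def)
    also have "\<dots> \<le> \<bar>L\<bar> * \<bar>y - x\<bar>" by (simp add: mult_right_mono)
    also have "\<dots> \<le> \<bar>L\<bar> * (e / (\<bar>L\<bar> + 1))" using dy by (intro mult_left_mono) (auto simp: dist_real_def)
    also have "\<dots> < e" using e by (simp add: field_simps)
    finally show "dist (H y) (H x) < e" by (simp add: dist_real_def)
  qed
qed

theorem theorem3:
  fixes K G eta etab xi c0 :: real
    and H :: "real \<Rightarrow> real"
    and \<sigma>tr :: mat3 and etr :: real
  assumes pos_consts: "K > 0" "G > 0" "eta > 0" "etab > 0" "xi > 0" "c0 > 0"
    and H_nonneg: "\<forall>x\<ge>0. H x \<ge> 0"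
    and H_mono: "mono_on {0..} H"
    and H_ssm: "strongly_semismooth H"
    and H0: "H 0 = 0"
    and sym_tr: "\<sigma>tr \<in> Sym3"
    and etr_nonneg: "etr \<ge> 0"
    and plastic: "yieldf eta xi c0 \<sigma>tr (H etr) > 0"
  shows
    "(\<exists>!dl. dl > 0 \<and> q_tr K G eta etab xi c0 H \<sigma>tr etr dl = 0)
   \<and> (\<exists>!(p, r, e, dl). dl \<ge> 0
          \<and> p = pres \<sigma>tr - dl * K * etab
          \<and> r = pos (rho \<sigma>tr - dl * G * sqrt 2)
          \<and> e = etr + dl * xi
          \<and> fhat eta xi c0 p r (H e) = 0)
   \<and> (\<exists>!(\<sigma>, e, dl). \<sigma> \<in> Sym3 \<and> dl \<ge> 0
          \<and> (\<exists>n\<in>subdiff_rho \<sigma>. \<sigma> = \<sigma>tr - dl *\<^sub>R ((G * sqrt 2) *\<^sub>R n + (K * etab) *\<^sub>R Id3))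
          \<and> e = etr + dl * xi
          \<and> yieldf eta xi c0 \<sigma> (H e) = 0)
   \<and> (\<exists>!(\<sigma>, e, dl). \<sigma> \<in> Sym3
          \<and> (\<exists>n\<in>subdiff_rho \<sigma>. \<sigma> = \<sigma>tr - dl *\<^sub>R ((G * sqrt 2) *\<^sub>R n + (K * etab) *\<^sub>R Id3))
          \<and> e = etr + dl * xi
          \<and> dl \<ge> 0 \<and> yieldf eta xi c0 \<sigma> (H e) \<le> 0 \<and> dl * yieldf eta xi c0 \<sigma> (H e) = 0)
   \<and> (\<forall>p r e dl. (dl \<ge> 0
          \<and> p = pres \<sigma>tr - dl * K * etab
          \<and> r = pos (rho \<sigma>tr - dl * G * sqrt 2)
          \<and> e = etr + dl * xi
          \<and> fhat eta xi c0 p r (H e) = 0) \<longrightarrow>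
        (q_tr K G eta etab xi c0 H \<sigma>tr etr (rho \<sigma>tr / (G * sqrt 2)) < 0 \<longrightarrow>
            0 < dl \<and> dl < rho \<sigma>tr / (G * sqrt 2) \<and> r > 0)
      \<and> (q_tr K G eta etab xi c0 H \<sigma>tr etr (rho \<sigma>tr / (G * sqrt 2)) \<ge> 0 \<longrightarrow>
            dl \<ge> rho \<sigma>tr / (G * sqrt 2) \<and> r = 0))"
proof -
  define s where "s = G * sqrt 2"
  define k where "k = K * etab"
  define q where "q = q_tr K G eta etab xi c0 H \<sigma>tr etr"
  have s0: "s > 0" using pos_consts by (simp add: s_def)
  have k0: "k > 0" using pos_consts by (simp add: k_def)
  have qf: "q g = sqrt (1/2) * pos (rho \<sigma>tr - g * s) + eta * (pres \<sigma>tr - g * k)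
     - xi * (c0 + H (etr + g * xi))" for g
    by (simp add: q_def q_tr_def s_def k_def mult.assoc)
  have rho0: "rho \<sigma>tr \<ge> 0" by (simp add: rho_norm)
  have q0: "q 0 > 0" using plastic rho0 by (simp add: qf yieldf_def fhat_def pos_def)
  have qdec: "q b < q a" if ab: "0 \<le> a" "a < b" for a b
  proof -
    have "a * s \<le> b * s" using ab s0 by simp
    hence 1: "pos (rho \<sigma>tr - b * s) \<le> pos (rho \<sigma>tr - a * s)" by (simp add: pos_def)
    have "a * k < b * k" using ab k0 by simp
    hence 2: "eta * (pres \<sigma>tr - b * k) < eta * (pres \<sigma>tr - a * k)" using pos_consts by simp
    have "a * xi \<le> b * xi" using ab pos_consts by simp
    hence "H (etr + a * xi) \<le> H (etr + b * xi)"
      using ab pos_consts etr_nonneg by (intro mono_onD[OF H_mono]) auto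
    hence 3: "xi * (c0 + H (etr + a * xi)) \<le> xi * (c0 + H (etr + b * xi))" using pos_consts by simp
    have 4: "sqrt (1/2) * pos (rho \<sigma>tr - b * s) \<le> sqrt (1/2) * pos (rho \<sigma>tr - a * s)"
      using 1 by (intro mult_left_mono) auto
    show ?thesis unfolding qf using 2 3 4 by linarith
  qed
  define T where "T = \<bar>rho \<sigma>tr\<bar> / s + \<bar>pres \<sigma>tr\<bar> / k + 1"
  have T0: "T > 0" using s0 k0 by (simp add: T_def add_nonneg_pos)
  have qT: "q T < 0"
  proof -
    have "T * s = \<bar>rho \<sigma>tr\<bar> + (\<bar>pres \<sigma>tr\<bar> / k + 1) * s" using s0 unfolding T_def by (simp add: distrib_right)
    moreover have "(\<bar>pres \<sigma>tr\<bar> / k + 1) * s \<ge> 0" using s0 k0 by simp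
    ultimately have "rho \<sigma>tr \<le> T * s" by linarith
    hence 1: "pos (rho \<sigma>tr - T * s) = 0" by (simp add: pos_def)
    have "T * k = \<bar>pres \<sigma>tr\<bar> + (\<bar>rho \<sigma>tr\<bar> / s + 1) * k" using k0 unfolding T_def by (simp add: distrib_right)
    moreover have "(\<bar>rho \<sigma>tr\<bar> / s + 1) * k \<ge> 0" using s0 k0 by simp
    ultimately have "pres \<sigma>tr \<le> T * k" by linarith
    hence 2: "eta * (pres \<sigma>tr - T * k) \<le> 0" using pos_consts by (simp add: mult_nonneg_nonpos)
    have "H (etr + T * xi) \<ge> 0" using H_nonneg etr_nonneg T0 pos_consts by simp
    hence 3: "xi * (c0 + H (etr + T * xi)) > 0" using pos_consts by simp
    show ?thesis unfolding qf using 1 2 3 by simp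
  qed
  have qc: "continuous_on {0..T} q"
  proof -
    have Hc: "continuous_on {0..T} (\<lambda>g. H (etr + g * xi))"
      by (rule continuous_on_compose2[OF H_cont[OF H_ssm]]) (auto intro!: continuous_intros add_nonneg_nonneg mult_nonneg_nonneg simp: etr_nonneg less_imp_le[OF pos_consts(5)])
    show ?thesis unfolding qf pos_def by (intro continuous_intros Hc)
  qed
  obtain dl0 where dl0: "0 \<le> dl0" "dl0 \<le> T" "q dl0 = 0"
    using IVT2'[of q T 0 0] qT q0 T0 qc by auto
  have dl0p: "dl0 > 0" using dl0 q0 by (cases "dl0 = 0") auto
  have uniq: "dl = dl0" if "dl \<ge> 0" "q dl = 0" for dl
    using qdec[of dl dl0] qdec[of dl0 dl] that dl0 by (cases dl dl0 rule: linorder_cases) auto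
  have fq: "fhat eta xi c0 (pres \<sigma>tr - dl * K * etab) (pos (rho \<sigma>tr - dl * G * sqrt 2)) (H (etr + dl * xi)) = q dl" for dl
    by (simp add: q_def q_tr_def fhat_def)
  have key: "yieldf eta xi c0 \<sigma> (H (etr + dl * xi)) = q dl \<and> \<sigma> = sig \<sigma>tr s k dl"
    if "dl \<ge> 0" "n \<in> subdiff_rho \<sigma>" "\<sigma> = \<sigma>tr - dl *\<^sub>R ((G * sqrt 2) *\<^sub>R n + (K * etab) *\<^sub>R Id3)" for \<sigma> n dl
  proof -
    have c: "pres \<sigma> = pres \<sigma>tr - dl * k \<and> rho \<sigma> = pos (rho \<sigma>tr - dl * s) \<and> \<sigma> = sig \<sigma>tr s k dl"
      using char[OF s0 that(1) that(2)] that(3) by (simp add: s_def k_def)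
    have "yieldf eta xi c0 \<sigma> (H (etr + dl * xi)) = q dl"
      using c unfolding yieldf_def fhat_def qf by (elim conjE) (simp only:)
    thus ?thesis using c by blast
  qed
  obtain n0 where sg: "sig \<sigma>tr s k dl0 \<in> Sym3" "n0 \<in> subdiff_rho (sig \<sigma>tr s k dl0)"
     "sig \<sigma>tr s k dl0 = \<sigma>tr - dl0 *\<^sub>R ((G * sqrt 2) *\<^sub>R n0 + (K * etab) *\<^sub>R Id3)"
    using exist[OF s0 dl0p sym_tr, of k] by (auto simp: s_def k_def)
  have ysg: "yieldf eta xi c0 (sig \<sigma>tr s k dl0) (H (etr + dl0 * xi)) = 0"
    using key[OF _ sg(2) sg(3)] dl0 by simp
  have A: "\<exists>!dl. dl > 0 \<and> q_tr K G eta etab xi c0 H \<sigma>tr etr dl = 0"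
    unfolding q_def[symmetric]
  proof (rule ex1I[of _ dl0])
    show "dl0 > 0 \<and> q dl0 = 0" using dl0p dl0 by simp
  next
    fix dl assume "dl > 0 \<and> q dl = 0"
    thus "dl = dl0" using uniq[of dl] by simp
  qed
  have R: "\<exists>!(p, r, e, dl). dl \<ge> 0
          \<and> p = pres \<sigma>tr - dl * K * etab
          \<and> r = pos (rho \<sigma>tr - dl * G * sqrt 2)
          \<and> e = etr + dl * xi
          \<and> fhat eta xi c0 p r (H e) = 0"
  proof (rule ex1_quad)
    fix p r e dl
    assume h: "dl \<ge> 0
          \<and> p = pres \<sigma>tr - dl * K * etab
          \<and> r = pos (rho \<sigma>tr - dl * G * sqrt 2)
          \<and> e = etr + dl * xi
          \<and> fhat eta xi c0 p r (H e) = 0"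
    have "q dl = 0" using h fq[of dl] by metis
    hence d: "dl = dl0" using uniq[of dl] h by blast
    show "p = pres \<sigma>tr - dl0 * K * etab \<and> r = pos (rho \<sigma>tr - dl0 * G * sqrt 2) \<and> e = etr + dl0 * xi \<and> dl = dl0"
      using h d by blast
  qed (use dl0 fq[of dl0] in simp)
  have P: "\<exists>!(\<sigma>, e, dl). \<sigma> \<in> Sym3 \<and> dl \<ge> 0
          \<and> (\<exists>n\<in>subdiff_rho \<sigma>. \<sigma> = \<sigma>tr - dl *\<^sub>R ((G * sqrt 2) *\<^sub>R n + (K * etab) *\<^sub>R Id3))
          \<and> e = etr + dl * xi
          \<and> yieldf eta xi c0 \<sigma> (H e) = 0"
  proof (rule ex1_triple)
    fix \<sigma> e dl
    assume h: "\<sigma> \<in> Sym3 \<and> dl \<ge> 0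
          \<and> (\<exists>n\<in>subdiff_rho \<sigma>. \<sigma> = \<sigma>tr - dl *\<^sub>R ((G * sqrt 2) *\<^sub>R n + (K * etab) *\<^sub>R Id3))
          \<and> e = etr + dl * xi
          \<and> yieldf eta xi c0 \<sigma> (H e) = 0"
    then obtain n where n: "n \<in> subdiff_rho \<sigma>" "\<sigma> = \<sigma>tr - dl *\<^sub>R ((G * sqrt 2) *\<^sub>R n + (K * etab) *\<^sub>R Id3)"
      by blast
    have dl_nn: "dl \<ge> 0" and e: "e = etr + dl * xi" and y: "yieldf eta xi c0 \<sigma> (H e) = 0" using h by auto
    have k1: "yieldf eta xi c0 \<sigma> (H (etr + dl * xi)) = q dl \<and> \<sigma> = sig \<sigma>tr s k dl" using key[OF dl_nn n] .
    have "yieldf eta xi c0 \<sigma> (H e) = q dl" unfolding e using k1 by blast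
    hence "q dl = 0" using y by linarith
    hence d: "dl = dl0" using uniq[of dl] dl_nn by blast
    show "\<sigma> = sig \<sigma>tr s k dl0 \<and> e = etr + dl0 * xi \<and> dl = dl0" using k1 e d by blast
  qed (use sg ysg dl0 in blast)
  have Q: "\<exists>!(\<sigma>, e, dl). \<sigma> \<in> Sym3
          \<and> (\<exists>n\<in>subdiff_rho \<sigma>. \<sigma> = \<sigma>tr - dl *\<^sub>R ((G * sqrt 2) *\<^sub>R n + (K * etab) *\<^sub>R Id3))
          \<and> e = etr + dl * xi
          \<and> dl \<ge> 0 \<and> yieldf eta xi c0 \<sigma> (H e) \<le> 0 \<and> dl * yieldf eta xi c0 \<sigma> (H e) = 0"
  proof (rule ex1_triple)
    show "sig \<sigma>tr s k dl0 \<in> Sym3 \<and> (\<exists>n\<in>subdiff_rho (sig \<sigma>tr s k dl0). sig \<sigma>tr s k dl0 = \<sigma>tr - dl0 *\<^sub>R ((G * sqrt 2) *\<^sub>R n + (K * etab) *\<^sub>R Id3))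
      \<and> etr + dl0 * xi = etr + dl0 * xi \<and> dl0 \<ge> 0 \<and> yieldf eta xi c0 (sig \<sigma>tr s k dl0) (H (etr + dl0 * xi)) \<le> 0
      \<and> dl0 * yieldf eta xi c0 (sig \<sigma>tr s k dl0) (H (etr + dl0 * xi)) = 0"
      using sg ysg dl0 by auto
  next
    fix \<sigma> e dl
    assume h: "\<sigma> \<in> Sym3 \<and> (\<exists>n\<in>subdiff_rho \<sigma>. \<sigma> = \<sigma>tr - dl *\<^sub>R ((G * sqrt 2) *\<^sub>R n + (K * etab) *\<^sub>R Id3))
          \<and> e = etr + dl * xi
          \<and> dl \<ge> 0 \<and> yieldf eta xi c0 \<sigma> (H e) \<le> 0 \<and> dl * yieldf eta xi c0 \<sigma> (H e) = 0"
    then obtain n where n: "n \<in> subdiff_rho \<sigma>" "\<sigma> = \<sigma>tr - dl *\<^sub>R ((G * sqrt 2) *\<^sub>R n + (K * etab) *\<^sub>R Id3)"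
      by blast
    have dl_nn: "dl \<ge> 0" and e: "e = etr + dl * xi" and y: "yieldf eta xi c0 \<sigma> (H e) \<le> 0"
      and y2: "dl * yieldf eta xi c0 \<sigma> (H e) = 0" using h by auto
    have k1: "yieldf eta xi c0 \<sigma> (H (etr + dl * xi)) = q dl \<and> \<sigma> = sig \<sigma>tr s k dl" using key[OF dl_nn n] .
    have ye: "yieldf eta xi c0 \<sigma> (H e) = q dl" unfolding e using k1 by blast
    have "dl \<noteq> 0"
    proof
      assume "dl = 0"
      thus False using ye y q0 by simp
    qed
    hence "q dl = 0" using ye y2 by simp
    hence d: "dl = dl0" using uniq[of dl] dl_nn by blast
    show "\<sigma> = sig \<sigma>tr s k dl0 \<and> e = etr + dl0 * xi \<and> dl = dl0" using k1 e d by blast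
  qed
  have L: "\<forall>p r e dl. (dl \<ge> 0
          \<and> p = pres \<sigma>tr - dl * K * etab
          \<and> r = pos (rho \<sigma>tr - dl * G * sqrt 2)
          \<and> e = etr + dl * xi
          \<and> fhat eta xi c0 p r (H e) = 0) \<longrightarrow>
        (q_tr K G eta etab xi c0 H \<sigma>tr etr (rho \<sigma>tr / (G * sqrt 2)) < 0 \<longrightarrow>
            0 < dl \<and> dl < rho \<sigma>tr / (G * sqrt 2) \<and> r > 0)
      \<and> (q_tr K G eta etab xi c0 H \<sigma>tr etr (rho \<sigma>tr / (G * sqrt 2)) \<ge> 0 \<longrightarrow>
            dl \<ge> rho \<sigma>tr / (G * sqrt 2) \<and> r = 0)"
  proof (intro allI impI)
    fix p r e dl
    assume h: "dl \<ge> 0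
          \<and> p = pres \<sigma>tr - dl * K * etab
          \<and> r = pos (rho \<sigma>tr - dl * G * sqrt 2)
          \<and> e = etr + dl * xi
          \<and> fhat eta xi c0 p r (H e) = 0"
    have "q dl = 0" using h fq[of dl] by metis
    hence d: "dl = dl0" using uniq[of dl] h by blast
    define b where "b = rho \<sigma>tr / s"
    have b0: "b \<ge> 0" using rho0 s0 by (simp add: b_def)
    have bs: "b * s = rho \<sigma>tr" using s0 by (simp add: b_def)
    have rr: "r = pos (rho \<sigma>tr - dl * s)" using h by (simp add: s_def mult.assoc)
    have qb: "q_tr K G eta etab xi c0 H \<sigma>tr etr (rho \<sigma>tr / (G * sqrt 2)) = q b"
      by (simp add: q_def b_def s_def)
    have c1: "q b < 0 \<longrightarrow> 0 < dl \<and> dl < b \<and> r > 0"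
    proof
      assume qbn: "q b < 0"
      have "\<not> b \<le> dl"
      proof
        assume "b \<le> dl"
        thus False using qdec[of b dl] b0 qbn d dl0 by (cases "b = dl") auto
      qed
      hence "dl < b" by simp
      moreover hence "dl * s < b * s" using s0 by simp
      ultimately show "0 < dl \<and> dl < b \<and> r > 0" using rr bs d dl0p by (simp add: pos_def)
    qed
    have c2: "q b \<ge> 0 \<longrightarrow> b \<le> dl \<and> r = 0"
    proof
      assume qbn: "q b \<ge> 0"
      have "\<not> dl < b"
      proof
        assume "dl < b"
        thus False using qdec[of dl b] h qbn d dl0 by auto
      qed
      hence "b \<le> dl" by simp
      moreover hence "b * s \<le> dl * s" using s0 by simp
      ultimately show "b \<le> dl \<and> r = 0" using rr bs by (simp add: pos_def)
    qed
    have bb: "rho \<sigma>tr / (G * sqrt 2) = b" by (simp add: b_def s_def)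
    show "(q_tr K G eta etab xi c0 H \<sigma>tr etr (rho \<sigma>tr / (G * sqrt 2)) < 0 \<longrightarrow>
            0 < dl \<and> dl < rho \<sigma>tr / (G * sqrt 2) \<and> r > 0)
      \<and> (q_tr K G eta etab xi c0 H \<sigma>tr etr (rho \<sigma>tr / (G * sqrt 2)) \<ge> 0 \<longrightarrow>
            dl \<ge> rho \<sigma>tr / (G * sqrt 2) \<and> r = 0)"
      unfolding bb using c1 c2 by (simp only: q_def)
  qed
  show ?thesis by (rule conjI[OF A conjI[OF R conjI[OF P conjI[OF Q L]]]])
qed

end
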